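(* Let $n\ge 2$ be an integer and $A\subseteq L_n$. Then: (a) $(X_n,\tau(A))$ is perfect if and only if $A$ is a $G_\delta$-set in $(L_n,\tau_E|_{L_n})$; (b) $(X_n,\tau(A))$ is Lindelöf if and only if $L_n\setminus A$ does not contain a closed uncountable subset of $(L_n,\tau_E|_{L_n})$; (c) $(X_n,\tau(A))$ is $\sigma$-compact if and only if $A$ is an $F_\sigma$-set in $(L_n,\tau_E|_{L_n})$ and $|L_n\setminus A|\le\aleph_0$.
   Context: For $\overline{x},\overline{a}\in\mathbb R^n$ let $|\overline{x}-\overline{a}|$ be the Euclidean distance and $B(\overline{a},\epsilon)=\{\overline{x}\in\mathbb R^n:|\overline{x}-\overline{a}|<\epsilon\}$. Let $P_n=\{\overline{x}\in\mathbb R^n: x_n>0\}$, $L_n=\{\overline{x}\in\mathbb R^n: x_n=0\}$, $X_n=P_n\cup L_n$, and let $\tau_E$ denote the Euclidean topology on $X_n$ (so $(L_n,\tau_E|_{L_n})\cong\mathbb R^{n-1}$). For $\overline{a}\in L_n$ and $\epsilon>0$ put $\overline{a(\epsilon)}=(a_1,\dots,a_{n-1},\epsilon)$ and $\tilde B(\overline{a},\epsilon)=\{\overline{a}\}\cup B(\overline{a(\epsilon)},\epsilon)$. For $A\subseteq L_n$, the topology $\tau(A)$ on $X_n$ is generated by the local bases: at $\overline{a}\in P_n$, the sets $B(\overline{a},\epsilon)$ with $0<\epsilon<a_n$; at $\overline{a}\in A$, the sets $B(\overline{a},\epsilon)\cap X_n$ with $\epsilon>0$; at $\overline{a}\in L_n\setminus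 A$, the sets $\tilde B(\overline{a},\epsilon)$ with $\epsilon>0$. A space is perfect if every closed set is a $G_\delta$-set. *)

theory Defs
  imports "HOL-Analysis.Analysis"
begin

text \<open>Points of R^n are modelled as pairs (u, t) :: (real^'m) \<times> real, where u collects the
  first n-1 coordinates and t is the last coordinate x_n; thus n = CARD('m) + 1 \<ge> 2.
  The metric on the product type is the Euclidean one (dist_Pair_Pair).\<close>

definition Pn :: "((real^'m) \<times> real) set" where
  "Pn = {p. snd p > 0}"

definition Ln :: "((real^'m) \<times> real) set" where
  "Ln = {p. snd p = 0}"

definition Xn :: "((real^'m) \<times> real) set" where
  "Xn = Pn \<union> Ln"

definition tball :: "(real^'m) \<times> real \<Rightarrow> real \<Rightarrow> ((real^'m) \<times> real) set" where
  "tball a e = insert a (ball (fst a, e) e)"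

definition nbhd :: "((real^'m) \<times> real) set \<Rightarrow> (real^'m) \<times> real \<Rightarrow> real \<Rightarrow> ((real^'m) \<times> real) set" where
  "nbhd A a e = (if a \<in> Pn then ball a e
                  else if a \<in> A then ball a e \<inter> Xn
                  else tball a e)"

definition admissible :: "(real^'m) \<times> real \<Rightarrow> real \<Rightarrow> bool" where
  "admissible a e \<longleftrightarrow> e > 0 \<and> (a \<in> Pn \<longrightarrow> e < snd a)"

definition tauA :: "((real^'m) \<times> real) set \<Rightarrow> ((real^'m) \<times> real) topology" where
  "tauA A = topology (\<lambda>U. U \<subseteq> Xn \<and> (\<forall>a\<in>U. \<exists>e. admissible a e \<and> nbhd A a e \<subseteq> U))"

definition perfect_top :: "'a topology \<Rightarrow> bool" where
  "perfect_top T \<longleftrightarrow> (\<forall>C. closedin T C \<longrightarrow> gdelta_in T C)"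

definition sigma_compact_space :: "'a topology \<Rightarrow> bool" where
  "sigma_compact_space T \<longleftrightarrow>
     (\<exists>\<K>. countable \<K> \<and> (\<forall>K\<in>\<K>. compactin T K) \<and> \<Union>\<K> = topspace T)"

lemma nbhd_mono:
  assumes "0 < e" "e \<le> e'"
  shows "nbhd A a e \<subseteq> nbhd A a e'"
proof -
  have "ball (fst a, e) e \<subseteq> ball (fst a, e') e'"
  proof
    fix y assume "y \<in> ball (fst a, e) e"
    hence "dist (fst a, e) y < e" by simp
    moreover have "dist (fst a, e') (fst a, e) = e' - e"
      using assms by (simp add: dist_Pair_Pair dist_real_def)
    ultimately show "y \<in> ball (fst a, e') e'"
      using dist_triangle[of "(fst a, e')" y "(fst a, e)"] by simp
  qed
  thus ?thesis using assms subset_ball[of e e' a] unfolding nbhd_def tball_def by (auto simp del: mem_ball)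
qed

lemma istopology_tauA:
  "istopology (\<lambda>U. U \<subseteq> Xn \<and> (\<forall>a\<in>U. \<exists>e. admissible a e \<and> nbhd A a e \<subseteq> U))"
  unfolding istopology_def
proof (intro conjI allI impI)
  fix S T assume "S \<subseteq> Xn \<and> (\<forall>a\<in>S. \<exists>e. admissible a e \<and> nbhd A a e \<subseteq> S)"
  then show "S \<inter> T \<subseteq> Xn" by blast
next
  fix S T assume S: "S \<subseteq> Xn \<and> (\<forall>a\<in>S. \<exists>e. admissible a e \<and> nbhd A a e \<subseteq> S)"
    and T: "T \<subseteq> Xn \<and> (\<forall>a\<in>T. \<exists>e. admissible a e \<and> nbhd A a e \<subseteq> T)"
  have "\<exists>e. admissible a e \<and> nbhd A a e \<subseteq> S \<inter> T" if a: "a \<in> S \<inter> T" for a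
  proof -
    obtain e1 where e1: "admissible a e1" "nbhd A a e1 \<subseteq> S" using S a by blast
    obtain e2 where e2: "admissible a e2" "nbhd A a e2 \<subseteq> T" using T a by blast
    have "admissible a (min e1 e2)" using e1 e2 unfolding admissible_def by auto
    moreover have "nbhd A a (min e1 e2) \<subseteq> S \<inter> T"
      using nbhd_mono[of "min e1 e2" e1 A a] nbhd_mono[of "min e1 e2" e2 A a] e1 e2
      unfolding admissible_def by auto
    ultimately show ?thesis by blast
  qed
  then show "\<forall>a\<in>S \<inter> T. \<exists>e. admissible a e \<and> nbhd A a e \<subseteq> S \<inter> T"
    by blast
next
  fix K assume K: "\<forall>U\<in>K. U \<subseteq> Xn \<and> (\<forall>a\<in>U. \<exists>e. admissible a e \<and> nbhd A a e \<subseteq> U)"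
  then show "\<Union>K \<subseteq> Xn" by blast
next
  fix K assume K: "\<forall>U\<in>K. U \<subseteq> Xn \<and> (\<forall>a\<in>U. \<exists>e. admissible a e \<and> nbhd A a e \<subseteq> U)"
  have "\<exists>e. admissible x e \<and> nbhd A x e \<subseteq> \<Union>K" if x: "x \<in> \<Union>K" for x
  proof -
    obtain U where U: "U \<in> K" "x \<in> U" using x by blast
    then obtain e where "admissible x e" "nbhd A x e \<subseteq> U" using K by blast
    thus ?thesis using U by blast
  qed
  then show "\<forall>a\<in>\<Union>K. \<exists>e. admissible a e \<and> nbhd A a e \<subseteq> \<Union>K" by blast
qed

lemma openin_tauA:
  "openin (tauA A) U \<longleftrightarrow> U \<subseteq> Xn \<and> (\<forall>a\<in>U. \<exists>e. admissible a e \<and> nbhd A a e \<subseteq> U)"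
  unfolding tauA_def topology_inverse'[OF istopology_tauA] ..

end

theory Submission
  imports Defs
begin

lemma Ln_closed: "closed (Ln :: ((real^'m) \<times> real) set)"
  unfolding Ln_def by (intro closed_Collect_eq continuous_intros)

lemma open_Pn_e: "open {p :: (real^'m) \<times> real. 0 < snd p}"
  by (intro open_Collect_less continuous_intros)

lemma Xn_cases: "x \<in> Xn \<Longrightarrow> x \<in> Pn \<or> x \<in> Ln"
  by (auto simp: Xn_def)

lemma Pn_Ln: "x \<in> Pn \<Longrightarrow> x \<notin> Ln"
  by (auto simp: Pn_def Ln_def)

lemma Pn_sub_Xn: "(Pn :: ((real^'m) \<times> real) set) \<subseteq> Xn"
  by (auto simp: Xn_def)

lemma Ln_sub_Xn: "(Ln :: ((real^'m) \<times> real) set) \<subseteq> Xn"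
  by (auto simp: Xn_def)

lemma ball_in_Pn:
  fixes a :: "(real^'m) \<times> real"
  assumes "a \<in> Pn" "e \<le> snd a"
  shows "ball a e \<subseteq> Pn"
proof
  fix y assume "y \<in> ball a e"
  hence "dist a y < e" by simp
  moreover have "dist (snd a) (snd y) \<le> dist a y" by (rule dist_snd_le)
  ultimately show "y \<in> Pn" using assms by (auto simp: Pn_def dist_real_def)
qed

lemma tdisc_in_Pn:
  fixes u :: "real^'m"
  assumes "e > 0"
  shows "ball (u, e) e \<subseteq> Pn"
proof
  fix y assume "y \<in> ball (u, e) e"
  hence "dist (u, e) y < e" by simp
  moreover have "dist (snd (u,e)) (snd y) \<le> dist (u,e) y" by (rule dist_snd_le)
  ultimately show "y \<in> Pn" using assms by (auto simp: Pn_def dist_real_def)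
qed

lemma tdisc_in_ball:
  fixes a :: "(real^'m) \<times> real"
  assumes "a \<in> Ln" "e > 0"
  shows "ball (fst a, e) e \<subseteq> ball a (2*e)"
proof
  fix y assume "y \<in> ball (fst a, e) e"
  hence "dist (fst a, e) y < e" by simp
  moreover have "dist a (fst a, e) = e"
    using assms by (cases a) (simp add: Ln_def dist_Pair_Pair dist_real_def)
  ultimately show "y \<in> ball a (2*e)"
    using dist_triangle[of a y "(fst a, e)"] by simp
qed

lemma nbhd_tball:
  assumes "a \<in> Ln" "a \<notin> A" "e > 0"
  shows "admissible a e \<and> nbhd A a e \<subseteq> insert a Pn"
  using assms tdisc_in_Pn[of e "fst a"] Pn_Ln[of a]
  unfolding admissible_def nbhd_def tball_def by auto

lemma nbhd_ball:
  assumes "a \<in> Pn \<union> A" "A \<subseteq> Ln" "admissible a e"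
  shows "nbhd A a e = ball a e \<inter> Xn"
proof (cases "a \<in> Pn")
  case True
  then have "ball a e \<subseteq> Pn" using assms ball_in_Pn[of a e] by (auto simp: admissible_def)
  then show ?thesis using True Pn_sub_Xn by (auto simp: nbhd_def)
next
  case False
  then show ?thesis using assms by (auto simp: nbhd_def)
qed

lemma open_nbhd:
  fixes a :: "(real^'m) \<times> real"
  assumes "open S" "a \<in> S \<inter> Xn"
  shows "\<exists>e. admissible a e \<and> nbhd A a e \<subseteq> S \<inter> Xn"
proof -
  obtain r where r: "r > 0" "ball a r \<subseteq> S" using assms open_contains_ball by blast
  show ?thesis
  proof (cases "a \<in> Pn")
    case True
    define e where "e = min r (snd a / 2)"
    have sa: "snd a > 0" using True by (simp add: Pn_def)
    have "admissible a e" using sa r by (auto simp add: admissible_def e_def min_less_iff_disj)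
    moreover have "ball a e \<subseteq> ball a r" by (rule subset_ball) (simp add: e_def)
    moreover have "ball a e \<subseteq> Pn" using ball_in_Pn[OF True, of e] sa by (simp add: e_def)
    ultimately have "admissible a e \<and> nbhd A a e \<subseteq> S \<inter> Xn" using True r Pn_sub_Xn by (auto simp: nbhd_def)
    then show ?thesis by blast
  next
    case False
    note F = False
    show ?thesis
    proof (cases "a \<in> A")
      case True
      then show ?thesis using F r by (auto simp: nbhd_def admissible_def intro!: exI[of _ r])
    next
      case False
      have aL: "a \<in> Ln" using F assms Xn_cases by blast
      have "ball (fst a, r/2) (r/2) \<subseteq> S" using tdisc_in_ball[OF aL, of "r/2"] r by auto
      moreover have "ball (fst a, r/2) (r/2) \<subseteq> Xn" using tdisc_in_Pn[of "r/2" "fst a"] r Pn_sub_Xn by auto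
      ultimately show ?thesis using F False r assms
        by (auto simp: nbhd_def admissible_def tball_def intro!: exI[of _ "r/2"])
    qed
  qed
qed

lemma tau_openin_open_Int:
  fixes S :: "((real^'m) \<times> real) set"
  shows "open S \<Longrightarrow> openin (tauA A) (S \<inter> Xn)"
  unfolding openin_tauA using open_nbhd by blast

lemma topspace_tauA: "topspace (tauA A) = Xn"
proof
  show "topspace (tauA A) \<subseteq> Xn" using openin_topspace[of "tauA A"] unfolding openin_tauA by blast
  show "Xn \<subseteq> topspace (tauA A)" using tau_openin_open_Int[of UNIV A] openin_subset by fastforce
qed

lemma tau_closedin_closed_Int:
  fixes S :: "((real^'m) \<times> real) set"
  assumes "closed S" shows "closedin (tauA A) (S \<inter> Xn)"
proof -
  have "Xn - S \<inter> Xn = (- S) \<inter> Xn" by auto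
  then show ?thesis unfolding closedin_def topspace_tauA
    using tau_openin_open_Int[of "- S" A] assms by (auto simp: open_Compl)
qed

lemma openin_Pn: "openin (tauA A) Pn"
proof -
  have "Pn = {p. 0 < snd p} \<inter> Xn" by (auto simp: Pn_def Xn_def)
  then show ?thesis using tau_openin_open_Int[OF open_Pn_e] by metis
qed

lemma openin_insert:
  assumes "b \<in> Ln" "b \<notin> A" "openin (tauA A) U"
  shows "openin (tauA A) (insert b (Pn \<union> U))"
  unfolding openin_tauA
proof (intro conjI ballI)
  show "insert b (Pn \<union> U) \<subseteq> Xn" using assms Pn_sub_Xn Ln_sub_Xn openin_subset[OF assms(3)]
    by (auto simp: topspace_tauA)
  fix a assume a: "a \<in> insert b (Pn \<union> U)"
  show "\<exists>e. admissible a e \<and> nbhd A a e \<subseteq> insert b (Pn \<union> U)"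
  proof (cases "a = b")
    case True then show ?thesis using nbhd_tball[OF assms(1,2), of 1] by auto
  next
    case False
    then have "a \<in> Pn \<or> a \<in> U" using a by auto
    then show ?thesis
    proof
      assume "a \<in> Pn"
      then obtain e where "admissible a e" "nbhd A a e \<subseteq> Pn"
        using openin_Pn[of A] unfolding openin_tauA by blast
      then show ?thesis by blast
    next
      assume "a \<in> U"
      then obtain e where "admissible a e" "nbhd A a e \<subseteq> U"
        using assms(3) unfolding openin_tauA by blast
      then show ?thesis by blast
    qed
  qed
qed

lemma closedin_sub:
  fixes C :: "((real^'m) \<times> real) set"
  assumes "closed C" "C \<subseteq> Ln - A" "S \<subseteq> C"
  shows "closedin (tauA A) S"
  unfolding closedin_def topspace_tauA openin_tauA
proof (intro conjI ballI)
  show "S \<subseteq> Xn" using assms Ln_sub_Xn by auto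
  show "Xn - S \<subseteq> Xn" by auto
  fix x assume x: "x \<in> Xn - S"
  show "\<exists>e. admissible x e \<and> nbhd A x e \<subseteq> Xn - S"
  proof (cases "x \<in> C")
    case True
    then have xx: "x \<in> Ln" "x \<notin> A" using assms by auto
    have SL: "S \<subseteq> Ln" using assms(2,3) by blast
    have "Pn \<inter> S = {}"
    proof (rule equals0I)
      fix y assume "y \<in> Pn \<inter> S"
      then show False using SL Pn_Ln[of y] by blast
    qed
    then have "insert x Pn \<subseteq> Xn - S" using x Pn_sub_Xn by blast
    then have "admissible x 1 \<and> nbhd A x 1 \<subseteq> Xn - S" using nbhd_tball[OF xx, of 1] by auto
    then show ?thesis by blast
  next
    case False
    then obtain e where "admissible x e" "nbhd A x e \<subseteq> (- C) \<inter> Xn"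
      using open_nbhd[of "- C" x A] assms x by (auto simp: open_Compl)
    then have "admissible x e \<and> nbhd A x e \<subseteq> Xn - S" using assms(3) by auto
    then show ?thesis by blast
  qed
qed

lemma closure_sub:
  fixes S :: "((real^'m) \<times> real) set"
  assumes "closedin (tauA A) S" "S \<subseteq> Ln - A" "A \<subseteq> Ln"
  shows "closure S \<subseteq> Ln - A"
proof
  fix x assume x: "x \<in> closure S"
  have xL: "x \<in> Ln" using x closure_minimal[of S Ln] Ln_closed assms by blast
  show "x \<in> Ln - A"
  proof (rule ccontr)
    assume "x \<notin> Ln - A"
    then have xA: "x \<in> A" using xL by blast
    have "openin (tauA A) (Xn - S)" using assms(1) by (simp add: closedin_def topspace_tauA)
    moreover have "x \<in> Xn - S" using xA assms Ln_sub_Xn by auto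
    ultimately obtain e where e: "admissible x e" "nbhd A x e \<subseteq> Xn - S"
      unfolding openin_tauA by blast
    have "nbhd A x e = ball x e \<inter> Xn" using nbhd_ball[of x A e] xA e assms by blast
    moreover obtain y where "y \<in> S" "dist y x < e" using x e closure_approachable[of x S]
      by (auto simp: admissible_def)
    moreover have "y \<in> Xn" using \<open>y \<in> S\<close> assms Ln_sub_Xn by blast
    ultimately have "y \<in> nbhd A x e" by (simp add: dist_commute)
    then show False using e \<open>y \<in> S\<close> by blast
  qed
qed

lemma discrete_countable:
  fixes S :: "'a::{metric_space, second_countable_topology} set"
  assumes "\<And>x. x \<in> S \<Longrightarrow> \<not> x islimpt S"
  shows "countable S"
proof -
  have "\<forall>x\<in>S. \<exists>r>0. \<forall>y\<in>S. dist y x < r \<longrightarrow> y = x"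
    using assms unfolding islimpt_approachable by force
  then obtain r where r: "\<And>x. x \<in> S \<Longrightarrow> r x > 0 \<and> (\<forall>y\<in>S. dist y x < r x \<longrightarrow> y = x)"
    by metis
  define f where "f x = ball x (r x / 2)" for x
  have disj: "f x \<inter> f y = {}" if "x \<in> S" "y \<in> S" "x \<noteq> y" for x y
  proof (rule ccontr)
    assume "f x \<inter> f y \<noteq> {}"
    then obtain z where z: "dist x z < r x / 2" "dist y z < r y / 2" by (auto simp: f_def)
    have d: "dist y x < r x / 2 + r y / 2" using z dist_triangle[of y x z] by (simp add: dist_commute)
    show False
    proof (cases "r y \<le> r x")
      case True
      then have "dist y x < r x" using d by linarith
      then show False using r[OF that(1)] that by blast
    next
      case False
      then have "dist x y < r y" using d by (simp add: dist_commute)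
      then show False using r[OF that(2)] that by blast
    qed
  qed
  have "countable (f ` S)"
  proof (rule countable_disjoint_open_subsets)
    show "\<And>T. T \<in> f ` S \<Longrightarrow> open T" by (auto simp: f_def)
    show "pairwise disjnt (f ` S)"
      unfolding pairwise_def disjnt_def using disj by (metis imageE)
  qed
  moreover have "inj_on f S"
  proof
    fix x y assume "x \<in> S" "y \<in> S" "f x = f y"
    moreover have "x \<in> f x" using r[OF \<open>x \<in> S\<close>] by (simp add: f_def)
    ultimately show "x = y" using disj by fastforce
  qed
  ultimately show ?thesis by (rule countable_image_inj_on)
qed

lemma compactin_of_compact:
  fixes K :: "((real^'m) \<times> real) set"
  assumes "compact K" "K \<subseteq> Pn \<union> A" "A \<subseteq> Ln"
  shows "compactin (tauA A) K"
  unfolding compactin_def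
proof (intro conjI allI impI)
  show "K \<subseteq> topspace (tauA A)" using assms Pn_sub_Xn Ln_sub_Xn by (auto simp: topspace_tauA)
  fix \<U> assume U: "(\<forall>U\<in>\<U>. openin (tauA A) U) \<and> K \<subseteq> \<Union>\<U>"
  have "\<forall>x\<in>K. \<exists>U e. U \<in> \<U> \<and> e > 0 \<and> ball x e \<inter> Xn \<subseteq> U"
  proof
    fix x assume x: "x \<in> K"
    then obtain U where "U \<in> \<U>" "x \<in> U" using U by blast
    then obtain e where e: "admissible x e" "nbhd A x e \<subseteq> U" using U unfolding openin_tauA by blast
    have "nbhd A x e = ball x e \<inter> Xn" using nbhd_ball[of x A e] x assms e by blast
    then have "U \<in> \<U> \<and> e > 0 \<and> ball x e \<inter> Xn \<subseteq> U" using e \<open>U \<in> \<U>\<close> by (simp add: admissible_def)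
    then show "\<exists>U e. U \<in> \<U> \<and> e > 0 \<and> ball x e \<inter> Xn \<subseteq> U" by blast
  qed
  then obtain Uf ef where Uf: "\<And>x. x \<in> K \<Longrightarrow> Uf x \<in> \<U> \<and> ef x > 0 \<and> ball x (ef x) \<inter> Xn \<subseteq> Uf x"
    by metis
  have "K \<subseteq> (\<Union>x\<in>K. ball x (ef x))" using Uf by force
  then obtain K' where K': "K' \<subseteq> K" "finite K'" "K \<subseteq> (\<Union>x\<in>K'. ball x (ef x))"
    using compactE_image[OF assms(1), of K "\<lambda>x. ball x (ef x)"] by auto
  show "\<exists>\<F>. finite \<F> \<and> \<F> \<subseteq> \<U> \<and> K \<subseteq> \<Union>\<F>"
  proof (intro exI conjI)
    show "finite (Uf ` K')" using K' by simp
    show "Uf ` K' \<subseteq> \<U>" using K' Uf by blast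
    show "K \<subseteq> \<Union> (Uf ` K')"
    proof
      fix y assume y: "y \<in> K"
      then obtain x where x: "x \<in> K'" "y \<in> ball x (ef x)" using K' by blast
      have "y \<in> Xn" using y assms Pn_sub_Xn Ln_sub_Xn by blast
      then have "y \<in> Uf x" using Uf[of x] x K' by blast
      then show "y \<in> \<Union> (Uf ` K')" using x by blast
    qed
  qed
qed

lemma compactin_imp_compact:
  fixes K :: "((real^'m) \<times> real) set"
  assumes "compactin (tauA A) K"
  shows "compact K"
proof -
  have "continuous_map (tauA A) euclidean id"
    unfolding continuous_map_def topspace_tauA
  proof (intro conjI allI impI)
    show "id \<in> Xn \<rightarrow> topspace euclidean" by simp
    fix U :: "((real^'m) \<times> real) set" assume "openin euclidean U"
    then have "open U" by simp
    moreover have "{x \<in> Xn. id x \<in> U} = U \<inter> Xn" by auto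
    ultimately show "openin (tauA A) {x \<in> Xn. id x \<in> U}" using tau_openin_open_Int by metis
  qed
  from image_compactin[OF assms this] show ?thesis by simp
qed

lemma not_limpt:
  fixes K :: "((real^'m) \<times> real) set"
  assumes "compactin (tauA A) K" "b \<in> Ln" "b \<notin> A"
  shows "\<not> b islimpt (K \<inter> Ln)"
proof
  assume lim: "b islimpt (K \<inter> Ln)"
  define U where "U k = insert b (Pn \<union> ((- cball b (1 / real (Suc k))) \<inter> Xn))" for k
  have opn: "openin (tauA A) (U k)" for k
    unfolding U_def by (rule openin_insert[OF assms(2,3)] tau_openin_open_Int)+ (simp add: open_Compl)
  have mono: "U k \<subseteq> U N" if "k \<le> N" for k N
  proof -
    have "1 / real (Suc N) \<le> 1 / real (Suc k)" using that by (simp add: frac_le)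
    then have "cball b (1 / real (Suc N)) \<subseteq> cball b (1 / real (Suc k))" by (rule subset_cball)
    then show ?thesis unfolding U_def by blast
  qed
  have KX: "K \<subseteq> Xn" using compactin_subset_topspace[OF assms(1)] by (simp add: topspace_tauA)
  have cov: "K \<subseteq> \<Union> (range U)"
  proof
    fix x assume x: "x \<in> K"
    show "x \<in> \<Union> (range U)"
    proof (cases "x = b")
      case True then show ?thesis by (auto simp: U_def)
    next
      case False
      then have "dist b x > 0" by simp
      then obtain k where k: "inverse (real (Suc k)) < dist b x" using reals_Archimedean by blast
      then have "x \<in> U k" using x KX by (auto simp: U_def divide_inverse)
      then show ?thesis by blast
    qed
  qed
  obtain F where F: "finite F" "F \<subseteq> range U" "K \<subseteq> \<Union>F"
    using assms(1) cov opn unfolding compactin_def by (metis (no_types, lifting) imageE)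
  obtain I where I: "finite I" "F = U ` I" using finite_subset_image[OF F(1,2)] by blast
  define N where "N = Max (insert 0 I)"
  have "\<Union>F \<subseteq> U N"
  proof
    fix x assume "x \<in> \<Union>F"
    then obtain k where "k \<in> I" "x \<in> U k" using I by blast
    then have "k \<le> N" using I by (simp add: N_def)
    then show "x \<in> U N" using mono \<open>x \<in> U k\<close> by blast
  qed
  then have KU: "K \<subseteq> U N" using F by blast
  obtain y where y: "y \<in> K \<inter> Ln" "y \<noteq> b" "dist y b < 1 / real (Suc N)"
    using lim unfolding islimpt_approachable by (metis of_nat_0_less_iff zero_less_Suc divide_pos_pos zero_less_one)
  have "y \<in> U N" using KU y by blast
  moreover have "y \<notin> Pn" using y Pn_Ln by blast
  ultimately have "y \<notin> cball b (1 / real (Suc N))" using y unfolding U_def by blast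
  then show False using y by (simp add: dist_commute)
qed

lemma open_fsigma_eu: "open (W::((real^'m)\<times>real) set) \<Longrightarrow> fsigma_in euclidean W"
  apply (rule open_imp_fsigma_in)
   apply (rule metrizable_space_euclidean)
  apply simp
  done

lemma closedin_A:
  fixes A :: "((real^'m) \<times> real) set"
  assumes "A \<subseteq> Ln"
  shows "closedin (tauA A) A"
  unfolding closedin_def topspace_tauA
proof (intro conjI)
  show "A \<subseteq> Xn" using assms Ln_sub_Xn by blast
  show "openin (tauA A) (Xn - A)"
    unfolding openin_tauA
  proof (intro conjI ballI)
    show "Xn - A \<subseteq> Xn" by blast
    fix x assume x: "x \<in> Xn - A"
    have PA: "Pn \<subseteq> Xn - A" using assms Pn_sub_Xn Pn_Ln by blast
    show "\<exists>e. admissible x e \<and> nbhd A x e \<subseteq> Xn - A"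
    proof (cases "x \<in> Pn")
      case True
      then obtain e where "admissible x e" "nbhd A x e \<subseteq> Pn"
        using openin_Pn[of A] unfolding openin_tauA by blast
      then have "admissible x e \<and> nbhd A x e \<subseteq> Xn - A" using PA by blast
      then show ?thesis by blast
    next
      case False
      then have xx: "x \<in> Ln" "x \<notin> A" using x Xn_cases[of x] by auto
      then have "admissible x 1 \<and> nbhd A x 1 \<subseteq> Xn - A"
        using nbhd_tball[OF xx zero_less_one] PA x by blast
      then show ?thesis by blast
    qed
  qed
qed

lemma part_a1:
  fixes A :: "((real^'m) \<times> real) set"
  assumes "A \<subseteq> Ln" "perfect_top (tauA A)"
  shows "gdelta_in (top_of_set Ln) A"
proof -
  have "gdelta_in (tauA A) A" using assms closedin_A unfolding perfect_top_def by blast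
  then have "fsigma_in (tauA A) (Xn - A)" unfolding gdelta_in_fsigma_in topspace_tauA by blast
  then obtain \<U> where U: "countable \<U>" "\<And>F. F \<in> \<U> \<Longrightarrow> closedin (tauA A) F" "\<Union>\<U> = Xn - A"
    unfolding fsigma_in_def union_of_def by blast
  have LX: "closedin (tauA A) Ln"
    using tau_closedin_closed_Int[OF Ln_closed, of A] Ln_sub_Xn by (metis inf.absorb1)
  have cl: "closure (F \<inter> Ln) \<subseteq> Ln - A" if "F \<in> \<U>" for F
  proof (rule closure_sub)
    show "closedin (tauA A) (F \<inter> Ln)" using U(2)[OF that] LX by (rule closedin_Int)
    show "F \<inter> Ln \<subseteq> Ln - A" using U(3) that by blast
  qed (use assms in auto)
  have "fsigma_in (top_of_set Ln) (Ln - A)"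
    unfolding fsigma_in_def union_of_def
  proof (intro exI conjI)
    show "countable ((\<lambda>F. closure (F \<inter> Ln)) ` \<U>)" using U(1) by simp
    show "(\<lambda>F. closure (F \<inter> Ln)) ` \<U> \<subseteq> Collect (closedin (top_of_set Ln))"
      using cl by (auto intro!: closed_subset)
    show "\<Union> ((\<lambda>F. closure (F \<inter> Ln)) ` \<U>) = Ln - A"
    proof
      show "\<Union> ((\<lambda>F. closure (F \<inter> Ln)) ` \<U>) \<subseteq> Ln - A" using cl by blast
      show "Ln - A \<subseteq> \<Union> ((\<lambda>F. closure (F \<inter> Ln)) ` \<U>)"
      proof
        fix x assume x: "x \<in> Ln - A"
        then have "x \<in> \<Union>\<U>" using U(3) Ln_sub_Xn by blast
        then obtain F where "F \<in> \<U>" "x \<in> F" by blast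
        then have "x \<in> F \<inter> Ln" using x by blast
        then have "x \<in> closure (F \<inter> Ln)" using closure_subset[of "F \<inter> Ln"] by (rule subsetD[rotated])
        then show "x \<in> \<Union> ((\<lambda>F. closure (F \<inter> Ln)) ` \<U>)" using \<open>F \<in> \<U>\<close> by blast
      qed
    qed
  qed
  then show ?thesis using assms(1) unfolding gdelta_in_fsigma_in by simp
qed

lemma part_a2:
  fixes A :: "((real^'m) \<times> real) set"
  assumes "A \<subseteq> Ln" "gdelta_in (top_of_set Ln) A"
  shows "perfect_top (tauA A)"
  unfolding perfect_top_def
proof (intro allI impI)
  fix Cl assume Cl: "closedin (tauA A) Cl"
  have "fsigma_in (top_of_set Ln) (Ln - A)" using assms(2) unfolding gdelta_in_fsigma_in by simp
  then obtain \<C> where C: "countable \<C>" "\<And>C. C \<in> \<C> \<Longrightarrow> closedin (top_of_set Ln) C" "\<Union>\<C> = Ln - A"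
    unfolding fsigma_in_def union_of_def by blast
  have Cc: "closed C" if "C \<in> \<C>" for C using closedin_closed_trans[OF C(2)[OF that] Ln_closed] .
  define U where "U = Xn - Cl"
  have U: "openin (tauA A) U" using Cl unfolding U_def closedin_def topspace_tauA by blast
  have "\<forall>x\<in>U \<inter> (Pn \<union> A). \<exists>e>0. ball x e \<inter> Xn \<subseteq> U"
  proof
    fix x assume x: "x \<in> U \<inter> (Pn \<union> A)"
    then obtain e where e: "admissible x e" "nbhd A x e \<subseteq> U" using U unfolding openin_tauA by blast
    have "nbhd A x e = ball x e \<inter> Xn" using nbhd_ball[of x A e] x assms e by blast
    then show "\<exists>e>0. ball x e \<inter> Xn \<subseteq> U" using e by (metis admissible_def)
  qed
  then obtain r where r: "\<And>x. x \<in> U \<inter> (Pn \<union> A) \<Longrightarrow> r x > 0 \<and> ball x (r x) \<inter> Xn \<subseteq> U"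
    by metis
  define W where "W = (\<Union>x\<in>U \<inter> (Pn \<union> A). ball x (r x))"
  have "open W" unfolding W_def by (rule open_UN) simp
  then have "fsigma_in euclidean W" by (rule open_fsigma_eu)
  then obtain \<D> where D: "countable \<D>" "\<And>D. D \<in> \<D> \<Longrightarrow> closedin euclidean D" "\<Union>\<D> = W"
    unfolding fsigma_in_def union_of_def by blast
  have WU: "W \<inter> Xn \<subseteq> U" unfolding W_def using r by blast
  have "fsigma_in (tauA A) U"
    unfolding fsigma_in_def union_of_def
  proof (intro exI conjI)
    let ?V = "(\<lambda>D. D \<inter> Xn) ` \<D> \<union> (\<lambda>C. C \<inter> U) ` \<C>"
    show "countable ?V" using C(1) D(1) by simp
    show "?V \<subseteq> Collect (closedin (tauA A))"
    proof
      fix V assume "V \<in> ?V"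
      then show "V \<in> Collect (closedin (tauA A))"
      proof
        assume "V \<in> (\<lambda>D. D \<inter> Xn) ` \<D>"
        then obtain D where "D \<in> \<D>" "V = D \<inter> Xn" by blast
        moreover have "closed D" using D(2)[OF \<open>D \<in> \<D>\<close>] by simp
        ultimately show ?thesis using tau_closedin_closed_Int[of D A] by simp
      next
        assume "V \<in> (\<lambda>C. C \<inter> U) ` \<C>"
        then obtain C where "C \<in> \<C>" "V = C \<inter> U" by blast
        moreover have "C \<subseteq> Ln - A" using C(3) \<open>C \<in> \<C>\<close> by blast
        ultimately show ?thesis using closedin_sub[OF Cc[OF \<open>C \<in> \<C>\<close>], of A V] by blast
      qed
    qed
    show "\<Union> ?V = U"
    proof
      show "\<Union> ?V \<subseteq> U" using WU D(3) by blast
      show "U \<subseteq> \<Union> ?V"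
      proof
        fix x assume x: "x \<in> U"
        have xX: "x \<in> Xn" using U x openin_subset topspace_tauA by blast
        show "x \<in> \<Union> ?V"
        proof (cases "x \<in> Pn \<union> A")
          case True
          then have "x \<in> W" unfolding W_def using r[of x] x by force
          then obtain D where "D \<in> \<D>" "x \<in> D" using D(3) by blast
          then show ?thesis using xX by blast
        next
          case False
          then have "x \<in> Ln - A" using xX Xn_cases[of x] by blast
          then obtain C where "C \<in> \<C>" "x \<in> C" using C(3) by blast
          then show ?thesis using x by blast
        qed
      qed
    qed
  qed
  moreover have "Cl \<subseteq> Xn" using Cl closedin_subset topspace_tauA by metis
  moreover have "Xn - Cl = U" by (simp add: U_def)
  ultimately show "gdelta_in (tauA A) Cl" unfolding gdelta_in_fsigma_in topspace_tauA by simp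
qed

lemma part_b1:
  fixes A :: "((real^'m) \<times> real) set"
  assumes "A \<subseteq> Ln" "Lindelof_space (tauA A)"
  shows "\<not> (\<exists>C. C \<subseteq> Ln - A \<and> closedin (top_of_set Ln) C \<and> uncountable C)"
proof
  assume "\<exists>C. C \<subseteq> Ln - A \<and> closedin (top_of_set Ln) C \<and> uncountable C"
  then obtain C where CA: "C \<subseteq> Ln - A" and Ccl: "closedin (top_of_set Ln) C" and unc: "uncountable C"
    by blast
  have Cc: "closed C" using closedin_closed_trans[OF Ccl Ln_closed] .
  define f where "f c = insert c (Pn \<union> ((- C) \<inter> Xn))" for c
  have opn: "openin (tauA A) U" if UU: "U \<in> f ` C" for U
  proof -
    obtain c where c: "c \<in> C" "U = f c" using UU by blast
    have "c \<in> Ln" "c \<notin> A" using c CA by auto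
    moreover have "openin (tauA A) ((- C) \<inter> Xn)" using Cc by (intro tau_openin_open_Int) (simp add: open_Compl)
    ultimately show ?thesis unfolding c f_def by (rule openin_insert)
  qed
  obtain c0 where c0: "c0 \<in> C" using unc by (metis countable_empty ex_in_conv)
  have un: "\<Union>(f ` C) = topspace (tauA A)"
  proof
    show "\<Union>(f ` C) \<subseteq> topspace (tauA A)"
      unfolding topspace_tauA f_def using CA Ln_sub_Xn Pn_sub_Xn by blast
    show "topspace (tauA A) \<subseteq> \<Union>(f ` C)"
    proof
      fix x assume x: "x \<in> topspace (tauA A)"
      show "x \<in> \<Union>(f ` C)"
      proof (cases "x \<in> C")
        case True then show ?thesis unfolding f_def by blast
      next
        case False
        then have "x \<in> f c0" using x unfolding f_def topspace_tauA by blast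
        then show ?thesis using c0 by blast
      qed
    qed
  qed
  obtain \<V> where V: "countable \<V>" "\<V> \<subseteq> f ` C" "\<Union>\<V> = topspace (tauA A)"
    using Lindelof_spaceD[OF assms(2) opn un] by blast
  obtain C' where C': "countable C'" "C' \<subseteq> C" "\<V> = f ` C'"
    using V(1,2) countable_subset_image by metis
  have "C \<subseteq> C'"
  proof
    fix c assume c: "c \<in> C"
    then have "c \<in> topspace (tauA A)" using CA Ln_sub_Xn topspace_tauA by blast
    then obtain c' where c': "c' \<in> C'" "c \<in> f c'" using V(3) C'(3) by blast
    have "c \<notin> Pn" using c CA Pn_Ln by blast
    then have "c = c'" using c' c unfolding f_def by blast
    then show "c \<in> C'" using c' by blast
  qed
  then have "countable C" using C'(1) countable_subset by blast
  then show False using unc by blast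
qed

lemma part_b2:
  fixes A :: "((real^'m) \<times> real) set"
  assumes "A \<subseteq> Ln" "\<not> (\<exists>C. C \<subseteq> Ln - A \<and> closedin (top_of_set Ln) C \<and> uncountable C)"
  shows "Lindelof_space (tauA A)"
  unfolding Lindelof_space_def
proof (intro allI impI)
  fix \<U> assume U: "(\<forall>U\<in>\<U>. openin (tauA A) U) \<and> \<Union>\<U> = topspace (tauA A)"
  have UX: "\<Union>\<U> = Xn" using U topspace_tauA by metis
  have "\<forall>x\<in>Pn \<union> A. \<exists>U e. U \<in> \<U> \<and> e > 0 \<and> ball x e \<inter> Xn \<subseteq> U"
  proof
    fix x assume x: "x \<in> Pn \<union> A"
    then have "x \<in> Xn" using assms Pn_sub_Xn Ln_sub_Xn by blast
    then obtain U where "U \<in> \<U>" "x \<in> U" using UX by blast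
    then obtain e where e: "admissible x e" "nbhd A x e \<subseteq> U" using U unfolding openin_tauA by blast
    have "nbhd A x e = ball x e \<inter> Xn" using nbhd_ball[of x A e] x assms e by blast
    then have "U \<in> \<U> \<and> e > 0 \<and> ball x e \<inter> Xn \<subseteq> U" using e \<open>U \<in> \<U>\<close> by (simp add: admissible_def)
    then show "\<exists>U e. U \<in> \<U> \<and> e > 0 \<and> ball x e \<inter> Xn \<subseteq> U" by blast
  qed
  then obtain Uf ef where Uf: "\<And>x. x \<in> Pn \<union> A \<Longrightarrow> Uf x \<in> \<U> \<and> ef x > 0 \<and> ball x (ef x) \<inter> Xn \<subseteq> Uf x"
    by metis
  define B where "B = (\<lambda>x. ball x (ef x)) ` (Pn \<union> A)"
  have Bopen: "\<And>S. S \<in> B \<Longrightarrow> open S" unfolding B_def by auto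
  obtain B' where B': "B' \<subseteq> B" "countable B'" "\<Union>B' = \<Union>B"
    by (rule Lindelof[of B, OF Bopen])
  have "countable B' \<and> B' \<subseteq> (\<lambda>x. ball x (ef x)) ` (Pn \<union> A)" using B'(1,2) unfolding B_def by blast
  then obtain S' where S': "countable S'" "S' \<subseteq> Pn \<union> A" "B' = (\<lambda>x. ball x (ef x)) ` S'"
    unfolding countable_subset_image by blast
  define W where "W = \<Union>B"
  have "open W" unfolding W_def B_def by (rule open_UN) simp
  define C0 where "C0 = Ln - W"
  have "C0 = Ln \<inter> (- W)" unfolding C0_def by blast
  then have C0cl: "closedin (top_of_set Ln) C0" using closedin_closed_Int[of "- W" Ln] \<open>open W\<close>
    by (simp add: closed_Compl)
  have inW: "x \<in> W" if "x \<in> Pn \<union> A" for x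
    using Uf[OF that] that unfolding W_def B_def by force
  have C0A: "C0 \<subseteq> Ln - A" unfolding C0_def using inW by blast
  have cC0: "countable C0" using assms(2) C0A C0cl by blast
  have "\<forall>c\<in>C0. \<exists>G. G \<in> \<U> \<and> c \<in> G"
    using UX C0A Ln_sub_Xn by blast
  then obtain G where G: "\<And>c. c \<in> C0 \<Longrightarrow> G c \<in> \<U> \<and> c \<in> G c" by metis
  show "\<exists>\<V>. countable \<V> \<and> \<V> \<subseteq> \<U> \<and> \<Union>\<V> = topspace (tauA A)"
  proof (intro exI conjI)
    show "countable (Uf ` S' \<union> G ` C0)" using S'(1) cC0 by simp
    show "Uf ` S' \<union> G ` C0 \<subseteq> \<U>" using Uf G S'(2) by blast
    show "\<Union> (Uf ` S' \<union> G ` C0) = topspace (tauA A)"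
    proof
      show "\<Union> (Uf ` S' \<union> G ` C0) \<subseteq> topspace (tauA A)"
        using Uf G S'(2) U by blast
      show "topspace (tauA A) \<subseteq> \<Union> (Uf ` S' \<union> G ` C0)"
      proof
        fix x assume x: "x \<in> topspace (tauA A)"
        then have xX: "x \<in> Xn" by (simp add: topspace_tauA)
        show "x \<in> \<Union> (Uf ` S' \<union> G ` C0)"
        proof (cases "x \<in> W")
          case True
          then have "x \<in> \<Union>B'" using B'(3) W_def by simp
          then obtain s where s: "s \<in> S'" "x \<in> ball s (ef s)" using S'(3) by blast
          then have "x \<in> Uf s" using Uf[of s] S'(2) xX by blast
          then show ?thesis using s by blast
        next
          case False
          then have "x \<notin> Pn \<union> A" using inW by blast
          then have "x \<in> C0" using xX False Xn_cases[of x] unfolding C0_def by blast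
          then show ?thesis using G[of x] by blast
        qed
      qed
    qed
  qed
qed

lemma part_c1:
  fixes A :: "((real^'m) \<times> real) set"
  assumes "A \<subseteq> Ln" "fsigma_in (top_of_set Ln) A" "countable (Ln - A)"
  shows "sigma_compact_space (tauA A)"
proof -
  obtain \<A> where AA: "countable \<A>" "\<And>F. F \<in> \<A> \<Longrightarrow> closedin (top_of_set Ln) F" "\<Union>\<A> = A"
    using assms(2) unfolding fsigma_in_def union_of_def by blast
  have Fc: "closed F" if "F \<in> \<A>" for F using closedin_closed_trans[OF AA(2)[OF that] Ln_closed] .
  define K where "K k = {p :: (real^'m) \<times> real. 1 / real (Suc k) \<le> snd p} \<inter> cball 0 (real k)" for k
  define g where "g = (\<lambda>(F, k::nat). F \<inter> cball (0 :: (real^'m) \<times> real) (real k))"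
  define \<K> where "\<K> = range K \<union> g ` (\<A> \<times> UNIV) \<union> (\<lambda>a. {a}) ` (Ln - A)"
  have cK: "compactin (tauA A) (K k)" for k
  proof (rule compactin_of_compact)
    have "closed {p :: (real^'m) \<times> real. 1 / real (Suc k) \<le> snd p}"
      by (intro closed_Collect_le continuous_intros)
    then show "compact (K k)" unfolding K_def by (intro closed_Int_compact) auto
    have "K k \<subseteq> Pn"
    proof
      fix p assume "p \<in> K k"
      then have "1 / real (Suc k) \<le> snd p" by (simp add: K_def)
      moreover have "0 < 1 / real (Suc k)" by simp
      ultimately have "0 < snd p" by linarith
      then show "p \<in> Pn" by (simp add: Pn_def)
    qed
    then show "K k \<subseteq> Pn \<union> A" by blast
  qed (rule assms(1))
  have cg: "compactin (tauA A) (g Fk)" if FkA: "Fk \<in> \<A> \<times> UNIV" for Fk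
  proof -
    obtain F k where Fk: "Fk = (F, k)" "F \<in> \<A>" using FkA by blast
    have "compact (F \<inter> cball 0 (real k))" using Fc[OF Fk(2)] by (intro closed_Int_compact) auto
    moreover have "F \<inter> cball 0 (real k) \<subseteq> Pn \<union> A" using AA(3) Fk(2) by blast
    ultimately show ?thesis unfolding Fk g_def using compactin_of_compact assms(1) by simp
  qed
  show ?thesis unfolding sigma_compact_space_def
  proof (intro exI conjI ballI)
    show "countable \<K>" unfolding \<K>_def using AA(1) assms(3) by simp
    fix C assume "C \<in> \<K>"
    then show "compactin (tauA A) C"
      unfolding \<K>_def using cK cg Ln_sub_Xn by (auto simp: topspace_tauA)
  next
    show "\<Union>\<K> = topspace (tauA A)"
    proof
      have "\<And>C. C \<in> \<K> \<Longrightarrow> C \<subseteq> topspace (tauA A)"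
        unfolding \<K>_def using cK cg compactin_subset_topspace Ln_sub_Xn by (fastforce simp: topspace_tauA)
      then show "\<Union>\<K> \<subseteq> topspace (tauA A)" by blast
      show "topspace (tauA A) \<subseteq> \<Union>\<K>"
      proof
        fix x assume x: "x \<in> topspace (tauA A)"
        then have xX: "x \<in> Xn" by (simp add: topspace_tauA)
        obtain k2 where k2: "norm x \<le> real k2" using real_arch_simple by blast
        show "x \<in> \<Union>\<K>"
        proof (cases "x \<in> Pn")
          case True
          then have "snd x > 0" by (simp add: Pn_def)
          then obtain k1 where k1: "inverse (real (Suc k1)) < snd x" using reals_Archimedean by blast
          have "1 / real (Suc (k1 + k2)) \<le> 1 / real (Suc k1)" by (simp add: frac_le)
          moreover have "1 / real (Suc k1) < snd x" using k1 by (simp only: inverse_eq_divide)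
          ultimately have "1 / real (Suc (k1 + k2)) \<le> snd x" by linarith
          moreover have "norm x \<le> real (k1 + k2)" using k2 by simp
          ultimately have "x \<in> K (k1 + k2)" by (simp add: K_def)
          then show ?thesis unfolding \<K>_def by blast
        next
          case False
          show ?thesis
          proof (cases "x \<in> A")
            case True
            then obtain F where F: "F \<in> \<A>" "x \<in> F" using AA(3) by blast
            then have "x \<in> g (F, k2)" using k2 by (simp add: g_def)
            moreover have "(F, k2) \<in> \<A> \<times> UNIV" using F by simp
            ultimately show ?thesis unfolding \<K>_def by blast
          next
            case xA: False
            then have "x \<in> Ln - A" using False xX Xn_cases[of x] by blast
            then show ?thesis unfolding \<K>_def by blast
          qed
        qed
      qed
    qed
  qed
qed

lemma part_c2:
  fixes A :: "((real^'m) \<times> real) set"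
  assumes "A \<subseteq> Ln" "sigma_compact_space (tauA A)"
  shows "fsigma_in (top_of_set Ln) A \<and> countable (Ln - A)"
proof -
  obtain \<K> where KK: "countable \<K>" "\<And>K. K \<in> \<K> \<Longrightarrow> compactin (tauA A) K" "\<Union>\<K> = Xn"
    using assms(2) unfolding sigma_compact_space_def topspace_tauA by blast
  have Kc: "closed K" if "K \<in> \<K>" for K
    using compactin_imp_compact[OF KK(2)[OF that]] by (rule compact_imp_closed)
  have cnt: "countable (K \<inter> (Ln - A))" if "K \<in> \<K>" for K
  proof (rule discrete_countable)
    fix x assume x: "x \<in> K \<inter> (Ln - A)"
    show "\<not> x islimpt (K \<inter> (Ln - A))"
    proof
      assume "x islimpt (K \<inter> (Ln - A))"
      then have "x islimpt (K \<inter> Ln)" by (rule islimpt_subset) blast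
      then show False using not_limpt[OF KK(2)[OF that]] x by blast
    qed
  qed
  have "Ln - A \<subseteq> (\<Union>K\<in>\<K>. K \<inter> (Ln - A))" using KK(3) Ln_sub_Xn by blast
  moreover have "countable (\<Union>K\<in>\<K>. K \<inter> (Ln - A))" using KK(1) cnt by blast
  ultimately have C: "countable (Ln - A)" by (rule countable_subset)
  have clo: "closed (K \<inter> A)" if "K \<in> \<K>" for K
    unfolding closed_limpt
  proof (intro allI impI)
    fix x assume x: "x islimpt (K \<inter> A)"
    have "x islimpt K" using x by (rule islimpt_subset) blast
    then have xK: "x \<in> K" using Kc[OF that] closed_limpt by blast
    have "x islimpt Ln" using x by (rule islimpt_subset) (use assms(1) in blast)
    then have xL: "x \<in> Ln" using Ln_closed closed_limpt by blast
    show "x \<in> K \<inter> A"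
    proof (rule ccontr)
      assume "x \<notin> K \<inter> A"
      then have "x \<notin> A" using xK by blast
      moreover have "x islimpt (K \<inter> Ln)" using x by (rule islimpt_subset) (use assms(1) in blast)
      ultimately show False using not_limpt[OF KK(2)[OF that] xL] by blast
    qed
  qed
  have "fsigma_in (top_of_set Ln) A"
    unfolding fsigma_in_def union_of_def
  proof (intro exI conjI)
    show "countable ((\<lambda>K. K \<inter> A) ` \<K>)" using KK(1) by simp
    show "(\<lambda>K. K \<inter> A) ` \<K> \<subseteq> Collect (closedin (top_of_set Ln))"
      using clo assms(1) by (auto intro!: closed_subset)
    show "\<Union> ((\<lambda>K. K \<inter> A) ` \<K>) = A" using KK(3) assms(1) Ln_sub_Xn by blast
  qed
  with C show ?thesis by blast
qed

theorem mainTheorem5: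
  fixes A :: "((real^'m) \<times> real) set"
  assumes "A \<subseteq> Ln"
  shows "(perfect_top (tauA A) \<longleftrightarrow> gdelta_in (top_of_set Ln) A)
       \<and> (Lindelof_space (tauA A) \<longleftrightarrow>
            \<not> (\<exists>C. C \<subseteq> Ln - A \<and> closedin (top_of_set Ln) C \<and> uncountable C))
       \<and> (sigma_compact_space (tauA A) \<longleftrightarrow>
            fsigma_in (top_of_set Ln) A \<and> countable (Ln - A))"
proof (intro conjI)
  show "perfect_top (tauA A) \<longleftrightarrow> gdelta_in (top_of_set Ln) A"
    by (rule iffI[OF part_a1[OF assms] part_a2[OF assms]])
  show "Lindelof_space (tauA A) \<longleftrightarrow>
            \<not> (\<exists>C. C \<subseteq> Ln - A \<and> closedin (top_of_set Ln) C \<and> uncountable C)"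
    by (rule iffI[OF part_b1[OF assms] part_b2[OF assms]])
  show "sigma_compact_space (tauA A) \<longleftrightarrow> fsigma_in (top_of_set Ln) A \<and> countable (Ln - A)"
  proof
    assume "sigma_compact_space (tauA A)"
    then show "fsigma_in (top_of_set Ln) A \<and> countable (Ln - A)" by (rule part_c2[OF assms])
  next
    assume "fsigma_in (top_of_set Ln) A \<and> countable (Ln - A)"
    then show "sigma_compact_space (tauA A)" using part_c1[OF assms] by simp
  qed
qed

end
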